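(* Let $X$ be an infinite compact metrizable space and $h\colon X\to X$ a minimal homeomorphism. If $F\subset X$ is closed and topologically $h$-small, then $F$ is universally null.
   Context: $M_h(X)$ denotes the set of $h$-invariant Borel probability measures on $X$; a Borel set is universally null if it has measure $0$ for all $\mu\in M_h(X)$. A closed set $F\subset X$ is topologically $h$-small if there is $m\in\mathbb{Z}_{+}$ such that whenever $d(0),\dots,d(m)$ are $m+1$ distinct integers, $h^{d(0)}(F)\cap\cdots\cap h^{d(m)}(F)=\varnothing$. *)

theory Defs
  imports "HOL-Probability.Probability"
begin

text \<open>Integer powers of a homeomorphism h with inverse g: h^d for d in Z.\<close>
definition hzpow :: "('a \<Rightarrow> 'a) \<Rightarrow> ('a \<Rightarrow> 'a) \<Rightarrow> int \<Rightarrow> 'a \<Rightarrow> 'a" where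
  "hzpow h g d = (if 0 \<le> d then h ^^ nat d else g ^^ nat (- d))"

definition minimal_homeo :: "'a::topological_space set \<Rightarrow> ('a \<Rightarrow> 'a) \<Rightarrow> ('a \<Rightarrow> 'a) \<Rightarrow> bool" where
  "minimal_homeo X h g \<longleftrightarrow> homeomorphism X X h g \<and>
     (\<forall>E. closedin (top_of_set X) E \<and> h ` E = E \<longrightarrow> E = {} \<or> E = X)"

definition inv_measures :: "'a::topological_space set \<Rightarrow> ('a \<Rightarrow> 'a) \<Rightarrow> 'a measure set" where
  "inv_measures X h = {\<mu>. prob_space \<mu> \<and> sets \<mu> = sets (restrict_space borel X) \<and>
      h \<in> measurable \<mu> \<mu> \<and>
      (\<forall>A\<in>sets \<mu>. emeasure \<mu> (h -` A \<inter> space \<mu>) = emeasure \<mu> A)}"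

definition universally_null :: "'a::topological_space set \<Rightarrow> ('a \<Rightarrow> 'a) \<Rightarrow> 'a set \<Rightarrow> bool" where
  "universally_null X h F \<longleftrightarrow> F \<in> sets (restrict_space borel X) \<and>
      (\<forall>\<mu>\<in>inv_measures X h. emeasure \<mu> F = 0)"

definition top_small :: "'a::topological_space set \<Rightarrow> ('a \<Rightarrow> 'a) \<Rightarrow> ('a \<Rightarrow> 'a) \<Rightarrow> 'a set \<Rightarrow> bool" where
  "top_small X h g F \<longleftrightarrow> closedin (top_of_set X) F \<and>
     (\<exists>m::nat. \<forall>d::nat \<Rightarrow> int. inj_on d {0..m} \<longrightarrow>
        (\<Inter>i\<in>{0..m}. hzpow h g (d i) ` F) = {})"

end

theory Submission
  imports Defs
begin

lemma count_bound:
  fixes F :: "'a set" and h g :: "'a \<Rightarrow> 'a" and m N :: nat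
  assumes sm: "\<forall>d::nat \<Rightarrow> int. inj_on d {0..m} \<longrightarrow> (\<Inter>i\<in>{0..m}. hzpow h g (d i) ` F) = {}"
  shows "card {i\<in>{..<N}. x \<in> (h^^i) ` F} \<le> m"
proof (rule ccontr)
  define S where "S = {i\<in>{..<N}. x \<in> (h^^i) ` F}"
  assume "\<not> card {i\<in>{..<N}. x \<in> (h^^i) ` F} \<le> m"
  then have "Suc m \<le> card S" unfolding S_def by simp
  then obtain T where T: "T \<subseteq> S" "card T = Suc m" "finite T"
    by (metis obtain_subset_with_card_n)
  then obtain f where f: "bij_betw f {0..<Suc m} T"
    using ex_bij_betw_nat_finite by metis
  have eq: "{0..<Suc m} = {0..m}" by auto
  define d where "d = (\<lambda>i. int (f i))"
  have "inj_on d {0..m}" using f eq unfolding d_def bij_betw_def inj_on_def by auto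
  moreover have "x \<in> (\<Inter>i\<in>{0..m}. hzpow h g (d i) ` F)"
  proof
    fix i assume "i \<in> {0..m}"
    then have "f i \<in> S" using f T eq unfolding bij_betw_def by auto
    then show "x \<in> hzpow h g (d i) ` F" unfolding S_def d_def hzpow_def by simp
  qed
  ultimately show False using sm by blast
qed

theorem corollary3p12:
  fixes X :: "'a::metric_space set" and h g :: "'a \<Rightarrow> 'a" and F :: "'a set"
  assumes "compact X" and "infinite X"
    and "minimal_homeo X h g"
    and "top_small X h g F"
  shows "universally_null X h F"
proof -
  have hom: "homeomorphism X X h g" using assms(3) unfolding minimal_homeo_def by blast
  then have hc: "continuous_on X h" and hX: "h ` X = X" and ghx: "\<forall>x\<in>X. g (h x) = x"
    unfolding homeomorphism_def by auto
  have Fcl: "closedin (top_of_set X) F" using assms(4) unfolding top_small_def by blast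
  obtain m where sm: "\<forall>d::nat \<Rightarrow> int. inj_on d {0..m} \<longrightarrow> (\<Inter>i\<in>{0..m}. hzpow h g (d i) ` F) = {}"
    using assms(4) unfolding top_small_def by blast
  have FX: "F \<subseteq> X" using Fcl closedin_imp_subset by blast
  have Fc: "compact F" using Fcl assms(1) closedin_compact by blast
  have iter: "(h^^n) ` F \<subseteq> X \<and> compact ((h^^n) ` F)" for n
  proof (induction n)
    case 0 then show ?case using FX Fc by simp
  next
    case (Suc n)
    have e: "(h^^Suc n) ` F = h ` ((h^^n) ` F)" by (simp add: image_comp)
    have "compact (h ` ((h^^n) ` F))"
      using Suc compact_continuous_image continuous_on_subset hc by blast
    moreover have "h ` ((h^^n) ` F) \<subseteq> X" using Suc hX by blast
    ultimately show ?case using e by simp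
  qed
  have meas: "A \<in> sets (restrict_space borel X)" if "A \<subseteq> X" "compact A" for A
  proof -
    have "A \<in> sets borel" using that compact_imp_closed borel_closed by blast
    then have "X \<inter> A \<in> sets (restrict_space borel X)" unfolding sets_restrict_space by blast
    then show ?thesis using that by (simp add: Int_absorb1)
  qed
  have Fm: "F \<in> sets (restrict_space borel X)" using meas FX Fc by blast
  show ?thesis unfolding universally_null_def
  proof (intro conjI ballI Fm)
    fix \<mu> assume mu: "\<mu> \<in> inv_measures X h"
    then have ps: "prob_space \<mu>" and sets\<mu>: "sets \<mu> = sets (restrict_space borel X)"
      and inv: "\<forall>A\<in>sets \<mu>. emeasure \<mu> (h -` A \<inter> space \<mu>) = emeasure \<mu> A"
      unfolding inv_measures_def by auto
    have sp: "space \<mu> = X" using sets_eq_imp_space_eq[OF sets\<mu>] by (simp add: space_restrict_space)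
    have Sm: "(h^^n) ` F \<in> sets \<mu>" for n using iter meas sets\<mu> by auto
    have Em: "emeasure \<mu> ((h^^n) ` F) = emeasure \<mu> F" for n
    proof (induction n)
      case 0 then show ?case by simp
    next
      case (Suc n)
      have e: "(h^^Suc n) ` F = h ` ((h^^n) ` F)" by (simp add: image_comp)
      have "h -` ((h^^Suc n) ` F) \<inter> space \<mu> = (h^^n) ` F"
      proof
        show "h -` (h^^Suc n) ` F \<inter> space \<mu> \<subseteq> (h^^n) ` F"
        proof
          fix x assume x: "x \<in> h -` (h^^Suc n) ` F \<inter> space \<mu>"
          then obtain y where y: "y \<in> (h^^n) ` F" "h x = h y" using e by auto
          have "x \<in> X" "y \<in> X" using x sp y iter by auto
          then have "x = y" using ghx y by metis
          then show "x \<in> (h^^n) ` F" using y by simp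
        qed
        show "(h^^n) ` F \<subseteq> h -` (h^^Suc n) ` F \<inter> space \<mu>" using e iter sp by auto
      qed
      then show ?case using inv Sm[of "Suc n"] Suc by metis
    qed
    have bound: "of_nat N * emeasure \<mu> F \<le> of_nat m" for N
    proof -
      have "(\<integral>\<^sup>+ x. (\<Sum>i\<in>{..<N}. indicator ((h^^i) ` F) x) \<partial>\<mu>)
           = (\<Sum>i\<in>{..<N}. emeasure \<mu> ((h^^i) ` F))"
        using Sm by (subst nn_integral_sum) (auto)
      also have "\<dots> = of_nat N * emeasure \<mu> F" using Em by simp
      finally have eq: "(\<integral>\<^sup>+ x. (\<Sum>i\<in>{..<N}. indicator ((h^^i) ` F) x) \<partial>\<mu>) = of_nat N * emeasure \<mu> F" .
      have pw: "(\<Sum>i\<in>{..<N}. indicator ((h^^i) ` F) x) \<le> (of_nat m :: ennreal)" for x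
      proof -
        have "of_nat (card {i\<in>{..<N}. x \<in> (h^^i) ` F}) = (\<Sum>i\<in>{i\<in>{..<N}. x \<in> (h^^i) ` F}. 1 :: ennreal)"
          by (subst card_eq_sum, subst of_nat_sum) simp
        also have "\<dots> = (\<Sum>i\<in>{..<N}. if x \<in> (h^^i) ` F then 1 else 0)"
          by (rule sum.inter_filter) simp
        finally have "(\<Sum>i\<in>{..<N}. indicator ((h^^i) ` F) x :: ennreal)
              = of_nat (card {i\<in>{..<N}. x \<in> (h^^i) ` F})" by (simp add: indicator_def of_bool_def)
        also have "\<dots> \<le> of_nat m" using count_bound[OF sm] by simp
        finally show ?thesis .
      qed
      have "(\<integral>\<^sup>+ x. (\<Sum>i\<in>{..<N}. indicator ((h^^i) ` F) x) \<partial>\<mu>) \<le> (\<integral>\<^sup>+ x. of_nat m \<partial>\<mu>)"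
        by (rule nn_integral_mono) (use pw in auto)
      also have "\<dots> = of_nat m * emeasure \<mu> (space \<mu>)" by simp
      also have "\<dots> = of_nat m" using prob_space.emeasure_space_1[OF ps] by simp
      finally show ?thesis using eq by simp
    qed
    have fin: "emeasure \<mu> F \<noteq> \<infinity>" using prob_space.emeasure_le_1[OF ps, of F] by (auto simp: top_unique)
    then obtain r where r: "emeasure \<mu> F = ennreal r" "r \<ge> 0" by (cases "emeasure \<mu> F") auto
    show "emeasure \<mu> F = 0"
    proof (rule ccontr)
      assume "emeasure \<mu> F \<noteq> 0"
      then have rp: "r > 0" using r by auto
      obtain N :: nat where N: "real m < real N * r" using reals_Archimedean3[OF rp] by metis
      have "ennreal (real N * r) \<le> ennreal (real m)"
        using bound[of N] r by (simp add: ennreal_mult ennreal_of_nat_eq_real_of_nat)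
      then have "real N * r \<le> real m" using rp by (simp add: ennreal_le_iff)
      then show False using N by simp
    qed
  qed
qed

end
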